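(* For any $n\geq 2$, the set $$\{{\sf Sum}(\sigma T_{k,1,n})\mid \sigma\in S_n,\ \sigma(k+1)=1,\ 1\leq k\leq n-1\}$$ is a basis of the free abelian group ${\rm Ker}(\beta_n)$, where $\sigma T=\{\sigma\circ\tau\mid\tau\in T\}$. In particular, the rank of ${\rm Ker}(\beta_n)$ equals $(n-1)!\cdot(n-1)$.
   Context: $S_m$ is the symmetric group on $\{1,\dots,m\}$ with product given by composition. Let $\mathbb Z\langle x_1,\dots,x_n\rangle$ be the free associative ring on $x_1,\dots,x_n$, with bracket $[u,v]=uv-vu$ and left-normed brackets $[u_1,\dots,u_r]=[[u_1,\dots,u_{r-1}],u_r]$. Let $\gamma_n$ be the additive subgroup generated by the monomials $x_{\sigma(1)}\cdots x_{\sigma(n)}$, $\sigma\in S_n$ (free abelian with these as basis); $\beta_n:\gamma_n\to\gamma_n$ is the homomorphism with $\beta_n(x_{\sigma(1)}\cdots x_{\sigma(n)})=[x_{\sigma(1)},\dots,x_{\sigma(n)}]$; for $T\subseteq S_n$, ${\sf Sum}(T)=\sum_{\sigma\in T}x_{\sigma(1)}\cdots x_{\sigma(n)}$. For $m\leq n$, $\iota_{m,n}:S_m\hookrightarrow S_n$ is the canonical embedding. An $(s,t)$-shuffle is a pair $(\alpha,\beta)$ of strictly increasing maps $\alpha:\{1,\dots,s\}\to\{1,\dots,s+t\}$, $\beta:\{1,\dots,t\}\to\{1,\dots,s+t\}$ with disjoint images; ${\sf Sh}^1(s,t)$ is the set of those with $\alpha(1)=1$. For $p,q\geq1$, $0\leq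 i\leq q-1$ and $(\alpha,\beta)\in{\sf Sh}^1(q-i,i)$, let $\tilde\sigma_{\alpha,\beta,p,q}\in S_{p+q}$ be given by $\tilde\sigma(j)=j$ for $1\leq j\leq p$, $\tilde\sigma(p+j)=p+\beta(i+1-j)$ for $1\leq j\leq i$, $\tilde\sigma(p+i+j)=p+\alpha(j)$ for $1\leq j\leq q-i$; let $\sigma_{\alpha,\beta,p,q}=\tilde\sigma_{\alpha,\beta,p,q}\circ(1,2)^i$ where $(1,2)$ is the transposition. Set $C_{p,q}=\{\sigma_{\alpha,\beta,p,q}\mid 0\leq i\leq q-1,\ (\alpha,\beta)\in{\sf Sh}^1(q-i,i)\}\subseteq S_{p+q}$. $\Phi_{k,l}\in S_{k+l}$ is defined by $\Phi_{k,l}(i)=i+k$ if $i\leq l$ and $\Phi_{k,l}(i)=i-l$ if $i>l$. Define $T_{k,l}=C_{k,l}\cup\{\Phi_{k,l}\circ\tau\mid\tau\in C_{l,k}\}\subseteq S_{k+l}$ and $T_{k,l,n}=\iota_{k+l,n}(T_{k,l})$ for $k+l\leq n$. *)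

theory Defs
  imports "HOL-Combinatorics.Combinatorics" "HOL-Library.Function_Algebras"
begin

(* Permutations of {1..m} are functions nat => nat that permute {1..m}
   (identity outside); the embedding iota_{m,n} is thus the identity. *)

(* Noncommutative polynomials: coefficient functions on words (nat lists). *)
(* lnbr (rev xs) = coefficient function of left-normed bracket [x_{xs!0},...,x_{xs!(r-1)}] *)
fun lnbr :: "nat list \<Rightarrow> nat list \<Rightarrow> int" where
  "lnbr [] w = (if w = [] then 1 else 0)"
| "lnbr [a] w = (if w = [a] then 1 else 0)"
| "lnbr (b # a # r) w =
     (if w \<noteq> [] \<and> last w = b then lnbr (a # r) (butlast w) else 0)
   - (if w \<noteq> [] \<and> hd w = b then lnbr (a # r) (tl w) else 0)"

definition lnb :: "nat list \<Rightarrow> nat list \<Rightarrow> int" where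
  "lnb xs = lnbr (rev xs)"

definition word :: "nat \<Rightarrow> (nat \<Rightarrow> nat) \<Rightarrow> nat list" where
  "word n \<sigma> = map \<sigma> [1..<n+1]"

(* gamma_n: Z-linear combinations of monomials, as coefficient functions on S_n *)
definition gamma :: "nat \<Rightarrow> ((nat \<Rightarrow> nat) \<Rightarrow> int) set" where
  "gamma n = {f. \<forall>\<tau>. f \<tau> \<noteq> 0 \<longrightarrow> \<tau> permutes {1..n}}"

definition beta :: "nat \<Rightarrow> ((nat \<Rightarrow> nat) \<Rightarrow> int) \<Rightarrow> ((nat \<Rightarrow> nat) \<Rightarrow> int)" where
  "beta n f = (\<lambda>\<tau>. if \<tau> permutes {1..n}
      then (\<Sum>\<sigma> | \<sigma> permutes {1..n}. f \<sigma> * lnb (word n \<sigma>) (word n \<tau>)) else 0)"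

definition ker_beta :: "nat \<Rightarrow> ((nat \<Rightarrow> nat) \<Rightarrow> int) set" where
  "ker_beta n = {f \<in> gamma n. beta n f = 0}"

definition mono :: "(nat \<Rightarrow> nat) \<Rightarrow> ((nat \<Rightarrow> nat) \<Rightarrow> int)" where
  "mono \<sigma> = (\<lambda>\<tau>. if \<tau> = \<sigma> then 1 else 0)"

definition Sum :: "(nat \<Rightarrow> nat) set \<Rightarrow> ((nat \<Rightarrow> nat) \<Rightarrow> int)" where
  "Sum T = (\<Sum>\<sigma>\<in>T. mono \<sigma>)"

definition Sh1 :: "nat \<Rightarrow> nat \<Rightarrow> ((nat \<Rightarrow> nat) \<times> (nat \<Rightarrow> nat)) set" where
  "Sh1 s t = {(\<alpha>, \<beta>). strict_mono_on {1..s} \<alpha> \<and> strict_mono_on {1..t} \<beta>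
      \<and> \<alpha> ` {1..s} \<subseteq> {1..s+t} \<and> \<beta> ` {1..t} \<subseteq> {1..s+t}
      \<and> \<alpha> ` {1..s} \<inter> \<beta> ` {1..t} = {} \<and> \<alpha> 1 = 1}"

definition sigma_tilde :: "(nat \<Rightarrow> nat) \<Rightarrow> (nat \<Rightarrow> nat) \<Rightarrow> nat \<Rightarrow> nat \<Rightarrow> nat \<Rightarrow> nat \<Rightarrow> nat" where
  "sigma_tilde \<alpha> \<beta> p q i j =
     (if 1 \<le> j \<and> j \<le> p then j
      else if p < j \<and> j \<le> p + i then p + \<beta> (i + 1 - (j - p))
      else if p + i < j \<and> j \<le> p + q then p + \<alpha> (j - p - i)
      else j)"

definition sigma_abpq :: "(nat \<Rightarrow> nat) \<Rightarrow> (nat \<Rightarrow> nat) \<Rightarrow> nat \<Rightarrow> nat \<Rightarrow> nat \<Rightarrow> nat \<Rightarrow> nat" where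
  "sigma_abpq \<alpha> \<beta> p q i = sigma_tilde \<alpha> \<beta> p q i \<circ> ((transpose (1::nat) 2) ^^ i)"

definition C :: "nat \<Rightarrow> nat \<Rightarrow> (nat \<Rightarrow> nat) set" where
  "C p q = {sigma_abpq \<alpha> \<beta> p q i | \<alpha> \<beta> i. i \<le> q - 1 \<and> (\<alpha>, \<beta>) \<in> Sh1 (q - i) i}"

definition Phi :: "nat \<Rightarrow> nat \<Rightarrow> nat \<Rightarrow> nat" where
  "Phi k l i = (if 1 \<le> i \<and> i \<le> l then i + k else if l < i \<and> i \<le> k + l then i - l else i)"

definition T :: "nat \<Rightarrow> nat \<Rightarrow> (nat \<Rightarrow> nat) set" where
  "T k l = C k l \<union> {Phi k l \<circ> \<tau> | \<tau>. \<tau> \<in> C l k}"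

definition zscale :: "int \<Rightarrow> ('a \<Rightarrow> int) \<Rightarrow> ('a \<Rightarrow> int)" where
  "zscale r f = (\<lambda>x. r * f x)"

end

theory Submission
  imports Defs
begin


definition X :: "nat \<Rightarrow> nat list \<Rightarrow> int" where "X a = (\<lambda>w. if w = [a] then 1 else 0)"
definition R :: "nat \<Rightarrow> (nat list \<Rightarrow> int) \<Rightarrow> (nat list \<Rightarrow> int)" where
 "R b f = (\<lambda>w. (if w \<noteq> [] \<and> last w = b then f (butlast w) else 0) - (if w \<noteq> [] \<and> hd w = b then f (tl w) else 0))"
definition Rs :: "nat list \<Rightarrow> (nat list \<Rightarrow> int) \<Rightarrow> (nat list \<Rightarrow> int)" where
  "Rs xs u = foldl (\<lambda>f z. R z f) u xs"
definition mul :: "(nat list \<Rightarrow> int) \<Rightarrow> (nat list \<Rightarrow> int) \<Rightarrow> (nat list \<Rightarrow> int)" where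
 "mul f g = (\<lambda>w. \<Sum>i\<le>length w. f (take i w) * g (drop i w))"
definition br where "br f g = mul f g - mul g f"

lemma lnbr_Cons_ne: "ys \<noteq> [] \<Longrightarrow> lnbr (b # ys) = R b (lnbr ys)"
  by (cases ys) (auto simp: R_def)
lemma lnbr_single: "lnbr [a] = X a" by (auto simp: X_def)

lemma Rs_Nil[simp]: "Rs [] u = u" by (simp add: Rs_def)
lemma Rs_Cons[simp]: "Rs (z#xs) u = Rs xs (R z u)" by (simp add: Rs_def)
lemma Rs_append: "Rs (xs@ys) u = Rs ys (Rs xs u)" by (simp add: Rs_def)

lemma lnb_Cons: "lnb (a # xs) = Rs xs (X a)"
proof (induction xs rule: rev_induct)
  case Nil then show ?case by (simp add: lnb_def lnbr_single)
next
  case (snoc z xs)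
  have "lnb (a # xs @ [z]) = lnbr (z # rev (a#xs))" by (simp add: lnb_def)
  also have "\<dots> = R z (lnb (a#xs))" by (subst lnbr_Cons_ne) (auto simp: lnb_def)
  finally show ?case using snoc by (simp add: Rs_append)
qed

lemma lnb_append: "xs \<noteq> [] \<Longrightarrow> lnb (xs @ ys) = Rs ys (lnb xs)"
  by (cases xs) (auto simp: lnb_Cons Rs_append)

lemma R_add: "R z (f + g) = R z f + R z g" by (auto simp: R_def fun_eq_iff)
lemma R_minus: "R z (- f) = - R z f" by (auto simp: R_def fun_eq_iff)
lemma R_diff: "R z (f - g) = R z f - R z g" by (auto simp: R_def fun_eq_iff)
lemma R_zero: "R z 0 = 0" by (auto simp: R_def fun_eq_iff)
lemma R_zscale: "R z (zscale c f) = zscale c (R z f)" by (auto simp: R_def zscale_def fun_eq_iff algebra_simps)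
lemma sum_fun_apply: "(sum F S) x = (\<Sum>s\<in>S. F s x)"
  by (induction S rule: infinite_finite_induct) auto
lemma R_zero': "R z (\<lambda>w. 0) = (\<lambda>w. 0)" by (auto simp: R_def fun_eq_iff)
lemma R_sum: "R z (\<Sum>s\<in>S. F s) = (\<Sum>s\<in>S. R z (F s))"
  by (auto simp: R_def sum_fun_apply sum_subtractf fun_eq_iff intro!: sum.cong)

lemma Rs_add: "Rs xs (f + g) = Rs xs f + Rs xs g" by (induction xs arbitrary: f g) (auto simp: R_add)
lemma Rs_minus: "Rs xs (- f) = - Rs xs f" by (induction xs arbitrary: f) (auto simp: R_minus)
lemma Rs_zero: "Rs xs 0 = 0" by (induction xs) (simp_all add: R_zero R_zero')
lemma Rs_zscale: "Rs xs (zscale c f) = zscale c (Rs xs f)" by (induction xs arbitrary: f) (auto simp: R_zscale)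
lemma Rs_sum: "Rs xs (\<Sum>s\<in>S. F s) = (\<Sum>s\<in>S. Rs xs (F s))"
  by (induction xs arbitrary: F) (simp_all add: R_sum)

lemma mul_X_right: "mul f (X z) = (\<lambda>w. if w \<noteq> [] \<and> last w = z then f (butlast w) else 0)"
proof (rule ext)
  fix w :: "nat list"
  have e: "\<And>i. i \<le> length w \<Longrightarrow> (drop i w = [z]) = (w \<noteq> [] \<and> last w = z \<and> i = length w - 1)"
  proof -
    fix i assume i: "i \<le> length w"
    show "(drop i w = [z]) = (w \<noteq> [] \<and> last w = z \<and> i = length w - 1)"
    proof
      assume d: "drop i w = [z]"
      then have "length (drop i w) = 1" by simp
      then have "i = length w - 1" "w \<noteq> []" by auto
      moreover have "last w = z" using d \<open>w \<noteq> []\<close>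
        by (metis append_take_drop_id last_appendR last_snoc list.distinct(1) append.left_neutral) 
      ultimately show "w \<noteq> [] \<and> last w = z \<and> i = length w - 1" by simp
    next
      assume "w \<noteq> [] \<and> last w = z \<and> i = length w - 1"
      then obtain ys where "w = ys @ [z]" "i = length ys"
        by (metis append_butlast_last_id length_butlast)
      then show "drop i w = [z]" by simp
    qed
  qed
  have "mul f (X z) w = (\<Sum>i\<le>length w. if i = length w - 1 then (if w \<noteq> [] \<and> last w = z then f (take i w) else 0) else 0)"
    unfolding mul_def X_def by (rule sum.cong) (auto simp: e)
  also have "\<dots> = (if w \<noteq> [] \<and> last w = z then f (butlast w) else 0)"
    by (simp add: butlast_conv_take)
  finally show "mul f (X z) w = (if w \<noteq> [] \<and> last w = z then f (butlast w) else 0)" .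
qed

lemma mul_X_left: "mul (X z) f = (\<lambda>w. if w \<noteq> [] \<and> hd w = z then f (tl w) else 0)"
proof (rule ext)
  fix w :: "nat list"
  have e: "i \<le> length w \<Longrightarrow> (take i w = [z]) = (w \<noteq> [] \<and> hd w = z \<and> i = 1)" for i
    by (cases w; cases i) (auto simp: take_Suc)
  have "mul (X z) f w = (\<Sum>i\<le>length w. if i = 1 then (if w \<noteq> [] \<and> hd w = z then f (drop i w) else 0) else 0)"
    unfolding mul_def X_def by (rule sum.cong) (auto simp: e)
  also have "\<dots> = (if w \<noteq> [] \<and> hd w = z then f (tl w) else 0)"
    by (cases w) (auto simp: drop_Suc Suc_le_eq)
  finally show "mul (X z) f w = (if w \<noteq> [] \<and> hd w = z then f (tl w) else 0)" .
qed

lemma R_mul: "R z f = mul f (X z) - mul (X z) f"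
  by (simp add: R_def mul_X_right mul_X_left fun_eq_iff)

lemma mul_add_left: "mul (f + g) h = mul f h + mul g h"
  by (simp add: mul_def fun_eq_iff algebra_simps sum.distrib)
lemma mul_add_right: "mul h (f + g) = mul h f + mul h g"
  by (simp add: mul_def fun_eq_iff algebra_simps sum.distrib)
lemma mul_diff_left: "mul (f - g) h = mul f h - mul g h"
  by (simp add: mul_def fun_eq_iff algebra_simps sum_subtractf)
lemma mul_diff_right: "mul h (f - g) = mul h f - mul h g"
  by (simp add: mul_def fun_eq_iff algebra_simps sum_subtractf)

lemma mul_assoc: "mul (mul f g) h = mul f (mul g h)"
proof (rule ext)
  fix w :: "nat list"
  define n where "n = length w"
  define G where "G j l = f (take j w) * g (take l (drop j w)) * h (drop (j+l) w)" for j l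
  have "mul (mul f g) h w = (\<Sum>i\<le>n. \<Sum>j\<le>i. G j (i - j))"
    unfolding mul_def G_def n_def
    by (rule sum.cong) (auto simp: sum_distrib_right min_def drop_take intro!: sum.cong)
  also have "\<dots> = (\<Sum>(j,l)\<in>{(j,l). j+l \<le> n}. G j l)"
    by (rule sum.triangle_reindex_eq[symmetric])
  also have "{(j,l). j+l \<le> n} = Sigma {..n} (\<lambda>j. {..n-j})" by auto
  also have "(\<Sum>(j,l)\<in>Sigma {..n} (\<lambda>j. {..n-j}). G j l) = (\<Sum>j\<le>n. \<Sum>l\<le>n-j. G j l)"
    by (rule sum.Sigma[symmetric]) auto
  also have "\<dots> = mul f (mul g h) w"
    unfolding mul_def G_def n_def
    by (rule sum.cong) (auto simp: sum_distrib_left add.commute mult.assoc)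
  finally show "mul (mul f g) h w = mul f (mul g h) w" .
qed

lemma jacobi: "br u (R z L) = R z (br u L) - br (R z u) L"
  unfolding R_mul br_def
  by (simp add: mul_diff_left mul_diff_right mul_assoc algebra_simps)


lemma sl_insert_max:
  assumes "finite A" "\<forall>a\<in>A. a < m"
  shows "sorted_list_of_set (insert m A) = sorted_list_of_set A @ [m]"
proof (rule sorted_distinct_set_unique)
  show "sorted (sorted_list_of_set A @ [m])" using assms
    by (auto simp: sorted_append less_imp_le)
  show "distinct (sorted_list_of_set A @ [m])" using assms by auto
  show "sorted (sorted_list_of_set (insert m A))" by (rule sorted_sorted_list_of_set)
  show "distinct (sorted_list_of_set (insert m A))" by (rule distinct_sorted_list_of_set)
  show "set (sorted_list_of_set (insert m A)) = set (sorted_list_of_set A @ [m])"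
  proof -
    have "set (sorted_list_of_set (insert m A)) = insert m A"
      by (rule set_sorted_list_of_set) (use assms in simp)
    then show ?thesis using assms by simp
  qed
qed

lemma zscale_one[simp]: "zscale 1 f = f" by (simp add: zscale_def)
lemma zscale_neg: "zscale (- c) f = - zscale c f" by (simp add: zscale_def fun_eq_iff)

lemma br_X: "br u (X z) = R z u" by (simp add: br_def R_mul)

lemma G:
  assumes "1 \<le> k"
  shows "br u (lnb (map y [1..<k+1])) = (\<Sum>S\<in>Pow {2..k}. zscale ((-1)^card S)
            (Rs (map y (rev (sorted_list_of_set S) @ sorted_list_of_set ({1..k} - S))) u))"
  using assms
proof (induction k arbitrary: u rule: nat_induct_at_least)
  case base
  have "Pow {2..1::nat} = {{}}" by auto
  then show ?case by (simp add: lnb_Cons br_X)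
next
  case (Suc n)
  define z where "z = y (Suc n)"
  define xs where "xs S = map y (rev (sorted_list_of_set S) @ sorted_list_of_set ({1..n} - S))" for S
  define c where "c S = ((-1::int)^card S)" for S :: "nat set"
  define L where "L = lnb (map y [1..<n+1])"
  have e1: "map y [1..<Suc n+1] = map y [1..<n+1] @ [z]" by (simp add: z_def)
  have L1: "lnb (map y [1..<Suc n+1]) = R z L"
    unfolding e1 L_def using Suc.hyps by (subst lnb_append) auto
  have "br u (lnb (map y [1..<Suc n+1])) = R z (br u L) - br (R z u) L"
    unfolding L1 by (rule jacobi)
  also have "\<dots> = (\<Sum>S\<in>Pow {2..n}. zscale (c S) (Rs (xs S @ [z]) u))
                  - (\<Sum>S\<in>Pow {2..n}. zscale (c S) (Rs (z # xs S) u))"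
  proof -
    have I: "br v L = (\<Sum>S\<in>Pow {2..n}. zscale (c S) (Rs (xs S) v))" for v
      unfolding L_def c_def xs_def by (rule Suc.IH)
    show ?thesis unfolding I by (simp add: R_sum R_zscale Rs_append)
  qed
  also have "\<dots> = (\<Sum>S\<in>Pow {2..n}. zscale (c S) (Rs (xs S @ [z]) u))
                  + (\<Sum>S\<in>Pow {2..n}. zscale (- c S) (Rs (z # xs S) u))"
    by (simp add: zscale_neg sum_negf)
  also have "(\<Sum>S\<in>Pow {2..n}. zscale (c S) (Rs (xs S @ [z]) u)) =
     (\<Sum>S\<in>Pow {2..n}. zscale ((-1)^card S)
            (Rs (map y (rev (sorted_list_of_set S) @ sorted_list_of_set ({1..Suc n} - S))) u))"
  proof (rule sum.cong)
    fix S assume "S \<in> Pow {2..n}"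
    then have "{1..Suc n} - S = insert (Suc n) ({1..n} - S)" by auto
    moreover have "sorted_list_of_set (insert (Suc n) ({1..n} - S)) = sorted_list_of_set ({1..n} - S) @ [Suc n]"
      by (rule sl_insert_max) auto
    ultimately show "zscale (c S) (Rs (xs S @ [z]) u) = zscale ((-1)^card S)
            (Rs (map y (rev (sorted_list_of_set S) @ sorted_list_of_set ({1..Suc n} - S))) u)"
      by (simp add: xs_def c_def z_def)
  qed simp
  also have "(\<Sum>S\<in>Pow {2..n}. zscale (- c S) (Rs (z # xs S) u)) =
     (\<Sum>S\<in>insert (Suc n) ` Pow {2..n}. zscale ((-1)^card S)
            (Rs (map y (rev (sorted_list_of_set S) @ sorted_list_of_set ({1..Suc n} - S))) u))"
  proof -
    have inj: "inj_on (insert (Suc n)) (Pow {2..n})"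
      by (rule inj_onI) (metis PowD atLeastAtMost_iff insert_ident not_less_eq_eq order_refl subsetD)
    show ?thesis
    proof (subst sum.reindex[OF inj], rule sum.cong)
      fix S assume S: "S \<in> Pow {2..n}"
      then have f: "finite S" by (auto intro: finite_subset)
      have ni: "Suc n \<notin> S" using S by auto
      have "{1..Suc n} - insert (Suc n) S = {1..n} - S" by auto
      moreover have "sorted_list_of_set (insert (Suc n) S) = sorted_list_of_set S @ [Suc n]"
        using S by (intro sl_insert_max) (auto intro: finite_subset)
      moreover have "card (insert (Suc n) S) = Suc (card S)" using f ni by simp
      ultimately show "zscale (- c S) (Rs (z # xs S) u) = ((\<lambda>S. zscale ((-1)^card S)
            (Rs (map y (rev (sorted_list_of_set S) @ sorted_list_of_set ({1..Suc n} - S))) u)) \<circ> insert (Suc n)) S"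
        by (simp add: xs_def c_def z_def)
    qed (rule refl)
  qed
  also have "(\<Sum>S\<in>Pow {2..n}. zscale ((-1)^card S)
            (Rs (map y (rev (sorted_list_of_set S) @ sorted_list_of_set ({1..Suc n} - S))) u))
      + (\<Sum>S\<in>insert (Suc n) ` Pow {2..n}. zscale ((-1)^card S)
            (Rs (map y (rev (sorted_list_of_set S) @ sorted_list_of_set ({1..Suc n} - S))) u))
      = (\<Sum>S\<in>Pow {2..Suc n}. zscale ((-1)^card S)
            (Rs (map y (rev (sorted_list_of_set S) @ sorted_list_of_set ({1..Suc n} - S))) u))"
  proof -
    have e: "{2..Suc n} = insert (Suc n) {2..n}" using Suc.hyps by auto
    show ?thesis unfolding e Pow_insert
      by (rule sum.union_disjoint[symmetric]) auto
  qed
  finally show ?case by simp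
qed


declare upt_Suc[simp del]

fun swp :: "nat list \<Rightarrow> nat list" where
  "swp (a # b # r) = b # a # r"
| "swp xs = xs"

lemma funpow_transpose: "(transpose a b ^^ i) = (if even i then id else transpose a b)"
  by (induction i) auto

lemma sigma_tilde_outside:
  assumes "i < q" "j = 0 \<or> p + q < j"
  shows "sigma_tilde \<alpha> \<beta> p q i j = j"
  using assms by (auto simp: sigma_tilde_def)

lemma Phi_outside: "j = 0 \<or> k + l < j \<Longrightarrow> Phi k l j = j"
  by (auto simp: Phi_def)

lemma H_outside:
  assumes k: "1 \<le> k" and "i \<le> k - 1" "j \<notin> {1..k+1}"
  shows "(Phi k 1 \<circ> sigma_abpq \<alpha> \<beta> 1 k i) j = j"
proof -
  have j: "j = 0 \<or> 1 + k < j" using assms by auto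
  have t: "(transpose (1::nat) 2 ^^ i) j = j"
    using j k by (auto simp: funpow_transpose transpose_def)
  have "sigma_tilde \<alpha> \<beta> 1 k i j = j" using j assms by (intro sigma_tilde_outside) auto
  then show ?thesis unfolding sigma_abpq_def comp_def t using j by (simp add: Phi_outside)
qed

lemma map_swp:
  assumes "3 \<le> m"
  shows "map (g \<circ> transpose (1::nat) 2) [1..<m] = swp (map g [1..<m])"
proof -
  have e1: "[1..<m] = 1 # [2..<m]" using upt_conv_Cons[of 1 m] assms by (simp add: numeral_2_eq_2)
  have e2: "[2..<m] = 2 # [3..<m]" using upt_conv_Cons[of 2 m] assms by simp
  have e: "[1..<m] = 1 # 2 # [3..<m]" by (simp only: e1 e2)
  have "map (g \<circ> transpose (1::nat) 2) [3..<m] = map g [3..<m]"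
    by (rule map_cong) (auto simp: transpose_def)
  then show ?thesis unfolding e by (simp add: transpose_def)
qed

lemma H:
  assumes k: "1 \<le> k" and i: "i \<le> k - 1" and sh: "(\<alpha>, \<beta>) \<in> Sh1 (k - i) i"
  shows "map (Phi k 1 \<circ> sigma_abpq \<alpha> \<beta> 1 k i) [1..<k+2]
       = (if odd i then swp else id) (Suc k # rev (map \<beta> [1..<i+1]) @ map \<alpha> [1..<k-i+1])"
proof -
  have ki: "k - i + i = k" using i k by simp
  from sh have aim: "\<alpha> ` {1..k-i} \<subseteq> {1..k}" and bim: "\<beta> ` {1..i} \<subseteq> {1..k}" and a1: "\<alpha> 1 = 1"
    by (auto simp: Sh1_def ki)
  define g where "g = Phi k 1 \<circ> sigma_tilde \<alpha> \<beta> 1 k i"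
  have split: "[1..<k+2] = [1] @ [2..<i+2] @ [i+2..<k+2]"
  proof -
    have "[2..<i+2+(k-i)] = [2..<i+2] @ [i+2..<i+2+(k-i)]" by (rule upt_add_eq_append) simp
    moreover have "i+2+(k-i) = k+2" using i k by simp
    ultimately have b: "[2..<k+2] = [2..<i+2] @ [i+2..<k+2]" by (simp del: upt_Suc)
    have a: "[1..<k+2] = 1 # [2..<k+2]" using upt_conv_Cons[of 1 "k+2"] by (simp del: upt_Suc add: numeral_2_eq_2)
    show ?thesis by (simp only: a b append.simps)
  qed
  have m1: "map g [2..<i+2] = rev (map \<beta> [1..<i+1])"
  proof (rule nth_equalityI)
    show "length (map g [2..<i+2]) = length (rev (map \<beta> [1..<i+1]))" by (simp del: upt_Suc)
    fix m assume "m < length (map g [2..<i+2])"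
    then have m: "m < i" by simp
    have "i - m \<in> {1..i}" using m by auto
    then have b: "\<beta> (i - m) \<in> {1..k}" using bim by blast
    have "map g [2..<i+2] ! m = g (2 + m)" using m by simp
    also have "\<dots> = \<beta> (i - m)"
      using m b k i by (simp add: g_def sigma_tilde_def Phi_def)
    also have "\<dots> = rev (map \<beta> [1..<i+1]) ! m" using m by (simp add: rev_nth Suc_diff_Suc)
    finally show "map g [2..<i+2] ! m = rev (map \<beta> [1..<i+1]) ! m" .
  qed
  have m2: "map g [i+2..<k+2] = map \<alpha> [1..<k-i+1]"
  proof (rule nth_equalityI)
    show "length (map g [i+2..<k+2]) = length (map \<alpha> [1..<k-i+1])" using i k by simp
    fix m assume "m < length (map g [i+2..<k+2])"
    then have m: "m < k - i" by simp
    have "Suc m \<in> {1..k-i}" using m by auto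
    then have a: "\<alpha> (Suc m) \<in> {1..k}" using aim by blast
    have "map g [i+2..<k+2] ! m = g (i + 2 + m)" using m by simp
    also have "\<dots> = \<alpha> (Suc m)"
      using m a k i by (simp add: g_def sigma_tilde_def Phi_def)
    also have "\<dots> = map \<alpha> [1..<k-i+1] ! m" using m by simp
    finally show "map g [i+2..<k+2] ! m = map \<alpha> [1..<k-i+1] ! m" .
  qed
  have g1: "g 1 = Suc k" by (simp add: g_def sigma_tilde_def Phi_def)
  have mg: "map g [1..<k+2] = Suc k # rev (map \<beta> [1..<i+1]) @ map \<alpha> [1..<k-i+1]"
    unfolding split map_append list.map m1 m2 g1 by simp
  have "Phi k 1 \<circ> sigma_abpq \<alpha> \<beta> 1 k i = g \<circ> (transpose 1 2 ^^ i)"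
    by (simp add: sigma_abpq_def g_def o_assoc)
  then have eq: "map (Phi k 1 \<circ> sigma_abpq \<alpha> \<beta> 1 k i) [1..<k+2] = map (g \<circ> (transpose 1 2 ^^ i)) [1..<k+2]"
    by (simp only:)
  show ?thesis
  proof (cases "even i")
    case True
    then show ?thesis unfolding eq funpow_transpose using mg by simp
  next
    case False
    have "map (g \<circ> transpose 1 2) [1..<k+2] = swp (map g [1..<k+2])"
      by (rule map_swp) (use k in simp)
    then show ?thesis unfolding eq funpow_transpose using mg False by simp
  qed
qed


definition wd :: "nat \<Rightarrow> nat set \<Rightarrow> nat list" where
  "wd k S = (if odd (card S) then swp else id)
      (Suc k # rev (sorted_list_of_set S) @ sorted_list_of_set ({1..k} - S))"

lemma sm_map:
  assumes "strict_mono_on {1..s} f"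
  shows "map f [1..<s+1] = sorted_list_of_set (f ` {1..s})"
proof (rule sorted_distinct_set_unique)
  have "sorted_wrt (<) (map f [1..<s+1])"
    unfolding sorted_wrt_map
    by (rule sorted_wrt_mono_rel[OF _ sorted_wrt_upt]) (auto intro: strict_mono_onD[OF assms])
  then show "sorted (map f [1..<s+1])" "distinct (map f [1..<s+1])" by (auto simp: strict_sorted_iff)
  show "sorted (sorted_list_of_set (f ` {1..s}))" "distinct (sorted_list_of_set (f ` {1..s}))" by auto
  have "{1..<s+1} = {1..s}" by auto
  then show "set (map f [1..<s+1]) = set (sorted_list_of_set (f ` {1..s}))" by simp
qed

lemma nth_map_list: "map (\<lambda>j. xs ! (j - 1)) [1..<length xs + 1] = xs"
  by (rule nth_equalityI) auto

lemma nth_sm: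
  assumes "sorted_wrt (<) xs"
  shows "strict_mono_on {1..length xs} (\<lambda>j. xs ! (j - 1))"
  by (rule strict_mono_onI) (auto intro!: sorted_wrt_nth_less[OF assms])

lemma img_nth: "(\<lambda>j. xs ! (j - 1)) ` {1..length xs} = set xs"
proof
  show "(\<lambda>j. xs ! (j - 1)) ` {1..length xs} \<subseteq> set xs" by auto
  show "set xs \<subseteq> (\<lambda>j. xs ! (j - 1)) ` {1..length xs}"
  proof
    fix x assume "x \<in> set xs"
    then obtain m where "m < length xs" "xs ! m = x" by (auto simp: in_set_conv_nth)
    then show "x \<in> (\<lambda>j. xs ! (j - 1)) ` {1..length xs}" by (intro image_eqI[where x="Suc m"]) auto
  qed
qed

lemma Sh1_facts:
  assumes k: "1 \<le> k" and i: "i \<le> k - 1" and sh: "(\<alpha>, \<beta>) \<in> Sh1 (k - i) i"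
  shows "map \<beta> [1..<i+1] = sorted_list_of_set (\<beta> ` {1..i})"
    and "map \<alpha> [1..<k-i+1] = sorted_list_of_set ({1..k} - \<beta> ` {1..i})"
    and "\<beta> ` {1..i} \<subseteq> {2..k}"
    and "card (\<beta> ` {1..i}) = i"
proof -
  have ki: "k - i + i = k" using i k by simp
  from sh have "strict_mono_on {1..k-i} \<alpha> \<and> strict_mono_on {1..i} \<beta>
    \<and> \<alpha> ` {1..k-i} \<subseteq> {1..k-i+i} \<and> \<beta> ` {1..i} \<subseteq> {1..k-i+i}
    \<and> \<alpha> ` {1..k-i} \<inter> \<beta> ` {1..i} = {} \<and> \<alpha> 1 = 1"
    unfolding Sh1_def by (simp only: mem_Collect_eq case_prod_conv)
  then have sa: "strict_mono_on {1..k-i} \<alpha>" and sb: "strict_mono_on {1..i} \<beta>"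
    and aim: "\<alpha> ` {1..k-i} \<subseteq> {1..k}" and bim: "\<beta> ` {1..i} \<subseteq> {1..k}"
    and dis: "\<alpha> ` {1..k-i} \<inter> \<beta> ` {1..i} = {}" and a1: "\<alpha> 1 = 1"
    unfolding ki by blast+
  show "map \<beta> [1..<i+1] = sorted_list_of_set (\<beta> ` {1..i})" by (rule sm_map[OF sb])
  have cb: "card (\<beta> ` {1..i}) = i"
    using strict_mono_on_imp_inj_on[OF sb] by (simp add: card_image)
  then show "card (\<beta> ` {1..i}) = i" .
  have ca: "card (\<alpha> ` {1..k-i}) = k - i"
    using strict_mono_on_imp_inj_on[OF sa] by (simp add: card_image)
  have "1 \<in> {1..k-i}" using i k by auto
  then have 1: "1 \<in> \<alpha> ` {1..k-i}" using a1 by (metis image_eqI)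
  show "\<beta> ` {1..i} \<subseteq> {2..k}"
  proof
    fix x assume x: "x \<in> \<beta> ` {1..i}"
    then have "x \<in> {1..k}" using bim by blast
    moreover have "x \<noteq> 1" using x dis 1 by blast
    ultimately show "x \<in> {2..k}" by auto
  qed
  have "\<alpha> ` {1..k-i} = {1..k} - \<beta> ` {1..i}"
  proof (rule card_subset_eq)
    show "finite ({1..k} - \<beta> ` {1..i})" by simp
    show "\<alpha> ` {1..k-i} \<subseteq> {1..k} - \<beta> ` {1..i}" using aim dis by auto
    have "card ({1..k} - \<beta> ` {1..i}) = k - i" using bim cb by (simp add: card_Diff_subset)
    then show "card (\<alpha> ` {1..k-i}) = card ({1..k} - \<beta> ` {1..i})" using ca by simp
  qed
  then show "map \<alpha> [1..<k-i+1] = sorted_list_of_set ({1..k} - \<beta> ` {1..i})"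
    using sm_map[OF sa] by simp
qed

lemma C1k_sub:
  assumes k: "1 \<le> k" and \<tau>: "\<tau> \<in> C 1 k"
  shows "map (Phi k 1 \<circ> \<tau>) [1..<k+2] \<in> wd k ` Pow {2..k}"
proof -
  from \<tau> obtain \<alpha> \<beta> i where t: "\<tau> = sigma_abpq \<alpha> \<beta> 1 k i" and i: "i \<le> k - 1"
    and sh: "(\<alpha>, \<beta>) \<in> Sh1 (k - i) i" by (auto simp: C_def)
  note f = Sh1_facts[OF k i sh]
  have "map (Phi k 1 \<circ> \<tau>) [1..<k+2] = wd k (\<beta> ` {1..i})"
    unfolding t H[OF k i sh] wd_def f(1) f(2) f(4) ..
  then show ?thesis using f(3) by blast
qed

lemma C1k_sup:
  assumes k: "1 \<le> k" and S: "S \<subseteq> {2..k}"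
  shows "wd k S \<in> (\<lambda>\<tau>. map (Phi k 1 \<circ> \<tau>) [1..<k+2]) ` C 1 k"
proof -
  define A where "A = {1..k} - S"
  define i where "i = card S"
  define xa where "xa = sorted_list_of_set A"
  define xb where "xb = sorted_list_of_set S"
  define \<alpha> where "\<alpha> = (\<lambda>j. xa ! (j - 1))"
  define \<beta> where "\<beta> = (\<lambda>j. xb ! (j - 1))"
  have fS: "finite S" using S finite_subset by blast
  have SA: "S \<subseteq> {1..k}" using S by auto
  have cS: "card S \<le> k - 1" using card_mono[OF _ S] by simp
  have la: "length xa = k - i" using SA by (simp add: xa_def A_def i_def card_Diff_subset fS)
  have lb: "length xb = i" by (simp add: xb_def i_def)
  have 1: "1 \<in> A" using S k by (auto simp: A_def)
  have i: "i \<le> k - 1" using cS by (simp add: i_def)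
  have ki: "k - i + i = k" using i k by simp
  have sxa: "sorted_wrt (<) xa" "set xa = A" by (auto simp: xa_def A_def)
  have sxb: "sorted_wrt (<) xb" "set xb = S" using fS by (auto simp: xb_def)
  have ia: "\<alpha> ` {1..k-i} = A" unfolding \<alpha>_def la[symmetric] img_nth sxa(2) ..
  have ib: "\<beta> ` {1..i} = S" unfolding \<beta>_def lb[symmetric] img_nth sxb(2) ..
  have a1: "\<alpha> 1 = 1"
  proof -
    have "xa \<noteq> []" using 1 sxa by auto
    have "xa = Min A # sorted_list_of_set (A - {Min A})" unfolding xa_def
      by (rule sorted_list_of_set_nonempty) (use 1 in \<open>auto simp: A_def\<close>)
    moreover have "Min A = 1" using 1 by (intro Min_eqI) (auto simp: A_def)
    ultimately show ?thesis by (simp add: \<alpha>_def)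
  qed
  have m1: "strict_mono_on {1..k-i} \<alpha>" using nth_sm[OF sxa(1)] unfolding la \<alpha>_def .
  have m2: "strict_mono_on {1..i} \<beta>" using nth_sm[OF sxb(1)] unfolding lb \<beta>_def .
  have m3: "\<alpha> ` {1..k-i} \<subseteq> {1..k-i+i}" unfolding ia ki by (auto simp: A_def)
  have m4: "\<beta> ` {1..i} \<subseteq> {1..k-i+i}" unfolding ib ki using S by auto
  have m5: "\<alpha> ` {1..k-i} \<inter> \<beta> ` {1..i} = {}" unfolding ia ib by (auto simp: A_def)
  have sh: "(\<alpha>, \<beta>) \<in> Sh1 (k - i) i"
    unfolding Sh1_def using m1 m2 m3 m4 m5 a1 by blast
  have ma: "map \<alpha> [1..<k-i+1] = xa" using nth_map_list[of xa] la by (simp add: \<alpha>_def)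
  have mb: "map \<beta> [1..<i+1] = xb" using nth_map_list[of xb] lb by (simp add: \<beta>_def)
  have "map (Phi k 1 \<circ> sigma_abpq \<alpha> \<beta> 1 k i) [1..<k+2] = (if odd i then swp else id) (Suc k # rev xb @ xa)"
    unfolding H[OF k i sh] ma mb ..
  also have "\<dots> = wd k S" unfolding wd_def xa_def xb_def A_def i_def ..
  finally have "map (Phi k 1 \<circ> sigma_abpq \<alpha> \<beta> 1 k i) [1..<k+2] = wd k S" .
  moreover have "sigma_abpq \<alpha> \<beta> 1 k i \<in> C 1 k" using i sh by (auto simp: C_def)
  ultimately show ?thesis by (metis (no_types, lifting) image_eqI)
qed


declare One_nat_def[simp del]

definition Dk :: "nat \<Rightarrow> (nat \<Rightarrow> nat) set" where
  "Dk k = {Phi k 1 \<circ> \<tau> | \<tau>. \<tau> \<in> C 1 k}"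

definition LL :: "nat \<Rightarrow> nat set \<Rightarrow> nat list" where
  "LL k S = Suc k # rev (sorted_list_of_set S) @ sorted_list_of_set ({1..k} - S)"

lemma wd_LL: "wd k S = (if odd (card S) then swp else id) (LL k S)"
  by (simp add: wd_def LL_def)

lemma swp_swp[simp]: "swp (swp xs) = xs"
  by (cases xs rule: swp.cases) auto

lemma set_swp[simp]: "set (swp xs) = set xs"
  by (cases xs rule: swp.cases) auto

lemma map_swp_comm: "map f (swp xs) = swp (map f xs)"
  by (cases xs rule: swp.cases) auto

lemma set_LL: "S \<subseteq> {2..k} \<Longrightarrow> set (LL k S) = {1..k+1}"
proof -
  assume S: "S \<subseteq> {2..k}"
  then have "finite S" by (rule finite_subset) simp
  then show ?thesis using S by (auto simp: LL_def)
qed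

lemma set_wd: "S \<subseteq> {2..k} \<Longrightarrow> set (wd k S) = {1..k+1}"
  by (simp add: wd_LL set_LL)

lemma wd_pos:
  assumes k: "1 \<le> k" and S: "S \<subseteq> {2..k}"
  shows "hd (wd k S) \<noteq> 1 \<and> wd k S \<noteq> [] \<and>
    (wd k S ! 0 = Suc k \<or> (2 \<le> k \<and> length (wd k S) \<ge> 2 \<and> wd k S ! 1 = Suc k))"
proof (cases "odd (card S)")
  case True
  then have "S \<noteq> {}" by (intro notI) simp
  then obtain s where s: "s \<in> S" by blast
  have fS: "finite S" using S by (rule finite_subset) simp
  then have "sorted_list_of_set S \<noteq> []" using s by auto
  then obtain a r where ar: "rev (sorted_list_of_set S) = a # r" by (cases "rev (sorted_list_of_set S)") auto
  have "a \<in> set (rev (sorted_list_of_set S))" unfolding ar by simp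
  then have "a \<in> S" using fS by simp
  then have a2: "2 \<le> a" "a \<le> k" using S by auto
  have "wd k S = a # Suc k # r @ sorted_list_of_set ({1..k} - S)"
    using True by (simp add: wd_LL LL_def ar)
  then show ?thesis using a2 by auto
next
  case False
  then show ?thesis using k by (simp add: wd_LL LL_def)
qed

lemma takeWhile_LL:
  assumes S: "S \<subseteq> {2..k}" and k: "1 \<le> k"
  shows "set (takeWhile (\<lambda>x. x \<noteq> 1) (tl (LL k S))) = S"
proof -
  have fS: "finite S" using S by (rule finite_subset) simp
  define A where "A = {1..k} - S"
  have 1: "1 \<in> A" using S k by (auto simp: A_def)
  have "sorted_list_of_set A = Min A # sorted_list_of_set (A - {Min A})"
    by (rule sorted_list_of_set_nonempty) (use 1 in \<open>auto simp: A_def\<close>)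
  moreover have "Min A = 1" using 1 by (intro Min_eqI) (auto simp: A_def)
  ultimately have sA: "sorted_list_of_set A = 1 # sorted_list_of_set (A - {1})" by simp
  have n1: "\<And>x. x \<in> set (rev (sorted_list_of_set S)) \<Longrightarrow> x \<noteq> 1" using S fS by auto
  have tw: "takeWhile (\<lambda>x. x \<noteq> 1) (rev (sorted_list_of_set S) @ sorted_list_of_set A) = rev (sorted_list_of_set S)"
    unfolding sA by (subst takeWhile_append2) (use n1 in auto)
  show ?thesis unfolding LL_def A_def[symmetric] list.sel tw using fS by simp
qed

lemma wd_inj: assumes k: "1 \<le> k" shows "inj_on (wd k) (Pow {2..k})"
proof (rule inj_onI)
  fix S S' assume S: "S \<in> Pow {2..k}" and S': "S' \<in> Pow {2..k}" and e: "wd k S = wd k S'"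
  have hdL: "\<And>S. S \<subseteq> {2..k} \<Longrightarrow> hd (LL k S) = Suc k" by (simp add: LL_def)
  have "LL k S = LL k S'"
  proof (cases "odd (card S)"; cases "odd (card S')")
    assume a: "odd (card S)" "odd (card S')"
    have "LL k S = swp (wd k S)" using a by (simp add: wd_LL)
    also have "\<dots> = swp (wd k S')" using e by simp
    also have "\<dots> = LL k S'" using a by (simp add: wd_LL)
    finally show ?thesis .
  next
    assume a: "odd (card S)" "\<not> odd (card S')"
    have "hd (wd k S) \<noteq> Suc k"
    proof -
      have fS: "finite S" using S by (intro finite_subset[of S "{2..k}"]) auto
      have "S \<noteq> {}" using a by (intro notI) simp
      then have "sorted_list_of_set S \<noteq> []" using fS by auto
      then obtain b r where ar: "rev (sorted_list_of_set S) = b # r" by (cases "rev (sorted_list_of_set S)") auto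
      have "b \<in> set (rev (sorted_list_of_set S))" unfolding ar by simp
      then have "b \<in> S" using fS by simp
      then have "b \<le> k" using S by auto
      moreover have "wd k S = b # Suc k # r @ sorted_list_of_set ({1..k} - S)"
        using a by (simp add: wd_LL LL_def ar)
      ultimately show ?thesis by simp
    qed
    moreover have "hd (wd k S') = Suc k" using a S' by (simp add: wd_LL hdL)
    ultimately show ?thesis using e by simp
  next
    assume a: "\<not> odd (card S)" "odd (card S')"
    have "hd (wd k S') \<noteq> Suc k"
    proof -
      have fS: "finite S'" using S' by (intro finite_subset[of S' "{2..k}"]) auto
      have "S' \<noteq> {}" using a by (intro notI) simp
      then have "sorted_list_of_set S' \<noteq> []" using fS by auto
      then obtain b r where ar: "rev (sorted_list_of_set S') = b # r" by (cases "rev (sorted_list_of_set S')") auto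
      have "b \<in> set (rev (sorted_list_of_set S'))" unfolding ar by simp
      then have "b \<in> S'" using fS by simp
      then have "b \<le> k" using S' by auto
      moreover have "wd k S' = b # Suc k # r @ sorted_list_of_set ({1..k} - S')"
        using a by (simp add: wd_LL LL_def ar)
      ultimately show ?thesis by simp
    qed
    moreover have "hd (wd k S) = Suc k" using a S by (simp add: wd_LL hdL)
    ultimately show ?thesis using e by simp
  next
    assume "\<not> odd (card S)" "\<not> odd (card S')"
    then show ?thesis using e by (simp add: wd_LL)
  qed
  then have "set (takeWhile (\<lambda>x. x \<noteq> 1) (tl (LL k S))) = set (takeWhile (\<lambda>x. x \<noteq> 1) (tl (LL k S')))"
    by (simp only:)
  then show "S = S'" unfolding takeWhile_LL[OF _ k] using S S' by (simp only: takeWhile_LL[OF _ k] PowD)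
qed

lemma Dk_out:
  assumes k: "1 \<le> k" and t: "\<tau> \<in> Dk k" and j: "j \<notin> {1..k+1}"
  shows "\<tau> j = j"
proof -
  from t obtain \<alpha> \<beta> i where "\<tau> = Phi k 1 \<circ> sigma_abpq \<alpha> \<beta> 1 k i" "i \<le> k - 1"
    by (auto simp: Dk_def C_def)
  then show ?thesis using H_outside[OF k _ j] by simp
qed

lemma Dk_img:
  assumes k: "1 \<le> k"
  shows "(\<lambda>\<tau>. map \<tau> [1..<k+2]) ` Dk k = wd k ` Pow {2..k}"
proof
  show "(\<lambda>\<tau>. map \<tau> [1..<k+2]) ` Dk k \<subseteq> wd k ` Pow {2..k}"
    using C1k_sub[OF k] by (auto simp: Dk_def)
  show "wd k ` Pow {2..k} \<subseteq> (\<lambda>\<tau>. map \<tau> [1..<k+2]) ` Dk k"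
  proof
    fix w assume "w \<in> wd k ` Pow {2..k}"
    then obtain S where S: "S \<subseteq> {2..k}" and w: "w = wd k S" by auto
    from C1k_sup[OF k S] obtain \<tau> where "\<tau> \<in> C 1 k" "wd k S = map (Phi k 1 \<circ> \<tau>) [1..<k+2]" by auto
    then show "w \<in> (\<lambda>\<tau>. map \<tau> [1..<k+2]) ` Dk k" unfolding w Dk_def by blast
  qed
qed

lemma map_eq_fun:
  assumes "map f [1..<k+2] = map g [1..<k+2]" "\<And>j. j \<notin> {1..k+1} \<Longrightarrow> f j = j"
    "\<And>j. j \<notin> {1..k+1} \<Longrightarrow> g j = j"
  shows "f = g"
proof
  fix j show "f j = g j"
  proof (cases "j \<in> {1..k+1}")
    case True
    then have "j \<in> set [1..<k+2]" by auto
    then show ?thesis using assms(1) by (simp add: map_eq_conv)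
  qed (use assms in auto)
qed

lemma Dk_inj: assumes k: "1 \<le> k" shows "inj_on (\<lambda>\<tau>. map \<tau> [1..<k+2]) (Dk k)"
  by (rule inj_onI) (rule map_eq_fun, auto intro: Dk_out[OF k])

lemma Ck1: "C k 1 = {id}"
proof -
  have "sigma_abpq \<alpha> \<beta> k 1 0 = id" if a1: "\<alpha> 1 = 1" for \<alpha> \<beta>
  proof (rule ext)
    fix x show "sigma_abpq \<alpha> \<beta> k 1 0 x = id x"
    proof (cases "k < x \<and> x \<le> k + 1")
      case True then have "x = k + 1" by auto
      then show ?thesis by (simp add: sigma_abpq_def sigma_tilde_def a1)
    next
      case False then show ?thesis by (auto simp: sigma_abpq_def sigma_tilde_def)
    qed
  qed
  note sid = this
  have sh: "(id, id) \<in> Sh1 1 0" by (auto simp: Sh1_def strict_mono_on_def)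
  show ?thesis
  proof
    show "C k 1 \<subseteq> {id}"
    proof
      fix \<rho> assume "\<rho> \<in> C k 1"
      then obtain \<alpha> \<beta> i where r: "\<rho> = sigma_abpq \<alpha> \<beta> k 1 i" and i: "i \<le> 1 - 1"
        and s: "(\<alpha>, \<beta>) \<in> Sh1 (1 - i) i" unfolding C_def by blast
      from i have i0: "i = 0" by simp
      from s have "\<alpha> 1 = 1" unfolding i0 Sh1_def by simp
      then show "\<rho> \<in> {id}" using sid r i0 by simp
    qed
    have "sigma_abpq id id k 1 0 \<in> C k 1" unfolding C_def using sh by force
    then show "{id} \<subseteq> C k 1" using sid[of id id] by simp
  qed
qed

lemma T_eq: "T k 1 = insert id (Dk k)"
  unfolding T_def Ck1 Dk_def by simp

lemma id_notin_Dk: assumes k: "1 \<le> k" shows "id \<notin> Dk k"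
proof
  assume "id \<in> Dk k"
  then have "map id [1..<k+2] \<in> wd k ` Pow {2..k}" using Dk_img[OF k] by blast
  then obtain S where S: "S \<subseteq> {2..k}" and e: "[1..<k+2] = wd k S" by auto
  have "hd [1..<k+2] = 1" by (simp add: hd_upt)
  moreover have "hd (wd k S) = hd [1..<k+2]" by (simp only: e)
  ultimately show False using wd_pos[OF k S] by simp
qed

lemma Dk_word:
  assumes k: "1 \<le> k" and t: "\<tau> \<in> Dk k"
  shows "\<exists>S. S \<subseteq> {2..k} \<and> map \<tau> [1..<k+2] = wd k S"
  using t Dk_img[OF k] by blast

lemma T_perm:
  assumes k: "1 \<le> k" and t: "\<tau> \<in> T k 1"
  shows "\<tau> permutes {1..k+1}"
proof (cases "\<tau> = id")
  case True then show ?thesis by (simp add: permutes_id)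
next
  case False
  then have tD: "\<tau> \<in> Dk k" using t by (simp add: T_eq)
  then obtain S where S: "S \<subseteq> {2..k}" and w: "map \<tau> [1..<k+2] = wd k S" using Dk_word[OF k] by blast
  have im: "\<tau> ` {1..k+1} = {1..k+1}"
  proof -
    have a: "\<tau> ` {1..k+1} = set (map \<tau> [1..<k+2])" by (auto simp: image_iff)
    have b: "set (map \<tau> [1..<k+2]) = set (wd k S)" by (simp only: w)
    show ?thesis by (simp only: a b set_wd[OF S])
  qed
  show ?thesis
  proof (rule bij_imp_permutes)
    show "bij_betw \<tau> {1..k+1} {1..k+1}" unfolding bij_betw_def
      using im eq_card_imp_inj_on[of "{1..k+1}" \<tau>] by simp
    show "\<And>x. x \<notin> {1..k+1} \<Longrightarrow> \<tau> x = x" using Dk_out[OF k tD] by blast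
  qed
qed

lemma T_pos:
  assumes k: "1 \<le> k" and t: "\<tau> \<in> T k 1" and n: "\<tau> \<noteq> id"
  shows "\<exists>j. 1 \<le> j \<and> j < k + 1 \<and> \<tau> j = k + 1"
proof -
  have tD: "\<tau> \<in> Dk k" using t n by (simp add: T_eq)
  then obtain S where S: "S \<subseteq> {2..k}" and w: "map \<tau> [1..<k+2] = wd k S" using Dk_word[OF k] by blast
  have len: "length (wd k S) = k + 1" using w[symmetric] by simp
  have nth: "\<tau> (Suc m) = wd k S ! m" if "m < k + 1" for m
    using that w[symmetric] by (simp add: Suc_eq_plus1_left)
  from wd_pos[OF k S] consider "wd k S ! 0 = Suc k" | "2 \<le> k" "wd k S ! 1 = Suc k" by blast
  then show ?thesis
  proof cases
    case 1 then show ?thesis using nth[of 0] k by (intro exI[of _ 1]) (auto simp: One_nat_def)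
  next
    case 2 then show ?thesis using nth[of 1] by (intro exI[of _ 2]) auto
  qed
qed

lemma T_fin: assumes k: "1 \<le> k" shows "finite (T k 1)"
proof -
  have "T k 1 \<subseteq> {p. p permutes {1..k+1}}" using T_perm[OF k] by blast
  then show ?thesis using finite_permutations[of "{1..k+1}"] finite_subset by blast
qed


lemma lnb_swp: assumes "2 \<le> length xs" shows "lnb (swp xs) = - lnb xs"
  using assms
proof (cases xs rule: swp.cases)
  case (1 a b r)
  have "R a (X b) = - R b (X a)" by (simp add: R_mul)
  then show ?thesis by (simp add: 1 lnb_Cons Rs_minus)
qed auto

lemma zscale_m1: "zscale ((-1) ^ m) f = (if odd m then - f else f)"
  by (auto simp: zscale_def fun_eq_iff)

lemma length_LL: "S \<subseteq> {2..k} \<Longrightarrow> length (LL k S) = k + 1"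
proof -
  assume S: "S \<subseteq> {2..k}"
  have fS: "finite S" using S by (rule finite_subset) simp
  have "card ({1..k} - S) = k - card S" using S fS by (subst card_Diff_subset) auto
  moreover have "card S \<le> k" using card_mono[OF _ S] by simp
  ultimately show ?thesis by (simp add: LL_def)
qed

lemma T_sum_zero:
  assumes k: "1 \<le> k"
  shows "(\<Sum>\<tau>\<in>T k 1. lnb (map (\<sigma> \<circ> \<tau>) [1..<k+2])) = 0"
proof -
  define F where "F w = lnb (map \<sigma> w)" for w
  define u where "u = X (\<sigma> (Suc k))"
  define L where "L = lnb (map \<sigma> [1..<k+1])"
  have fD: "finite (Dk k)" using T_fin[OF k] by (simp add: T_eq)
  have "(\<Sum>\<tau>\<in>T k 1. lnb (map (\<sigma> \<circ> \<tau>) [1..<k+2])) = (\<Sum>\<tau>\<in>T k 1. F (map \<tau> [1..<k+2]))"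
    by (simp add: F_def)
  also have "\<dots> = F [1..<k+2] + (\<Sum>\<tau>\<in>Dk k. F (map \<tau> [1..<k+2]))"
    unfolding T_eq using fD id_notin_Dk[OF k] by simp
  also have "(\<Sum>\<tau>\<in>Dk k. F (map \<tau> [1..<k+2])) = (\<Sum>w\<in>(\<lambda>\<tau>. map \<tau> [1..<k+2]) ` Dk k. F w)"
    by (rule sum.reindex[OF Dk_inj[OF k], symmetric, unfolded o_def])
  also have "\<dots> = (\<Sum>w\<in>wd k ` Pow {2..k}. F w)" by (simp only: Dk_img[OF k])
  also have "\<dots> = (\<Sum>S\<in>Pow {2..k}. F (wd k S))"
    by (rule sum.reindex[OF wd_inj[OF k], unfolded o_def])
  also have "\<dots> = (\<Sum>S\<in>Pow {2..k}. zscale ((-1)^card S)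
            (Rs (map \<sigma> (rev (sorted_list_of_set S) @ sorted_list_of_set ({1..k} - S))) u))"
  proof (rule sum.cong)
    fix S assume "S \<in> Pow {2..k}"
    then have S: "S \<subseteq> {2..k}" by simp
    have l: "2 \<le> length (map \<sigma> (LL k S))" using length_LL[OF S] k by simp
    have "F (wd k S) = zscale ((-1)^card S) (F (LL k S))"
      using lnb_swp[OF l] by (simp add: wd_LL F_def zscale_m1 map_swp_comm)
    also have "F (LL k S) = Rs (map \<sigma> (rev (sorted_list_of_set S) @ sorted_list_of_set ({1..k} - S))) u"
      by (simp add: F_def LL_def lnb_Cons u_def)
    finally show "F (wd k S) = zscale ((-1)^card S)
            (Rs (map \<sigma> (rev (sorted_list_of_set S) @ sorted_list_of_set ({1..k} - S))) u)" .
  qed simp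
  also have "\<dots> = br u L" unfolding L_def by (rule G[OF k, symmetric])
  also have "F [1..<k+2] = br L u"
  proof -
    have kk: "k+2 = Suc (k+1)" by simp
    have e: "[1..<k+2] = [1..<k+1] @ [k+1]" unfolding kk by (rule upt_Suc_append) simp
    have "map \<sigma> [1..<k+2] = map \<sigma> [1..<k+1] @ [\<sigma> (Suc k)]" unfolding e by (simp add: Suc_eq_plus1)
    then have "F [1..<k+2] = R (\<sigma> (Suc k)) L"
      unfolding F_def L_def using k by (simp add: lnb_append)
    then show ?thesis by (simp add: br_X u_def)
  qed
  also have "br L u + br u L = 0" by (simp add: br_def)
  finally show ?thesis .
qed

lemma word_comp:
  assumes k: "1 \<le> k" and kn: "k + 1 \<le> n" and t: "\<tau> \<in> T k 1"
  shows "word n (\<sigma> \<circ> \<tau>) = map (\<sigma> \<circ> \<tau>) [1..<k+2] @ map \<sigma> [k+2..<n+1]"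
proof -
  have p: "\<tau> permutes {1..k+1}" by (rule T_perm[OF k t])
  have nn: "n+1 = k+2+(n-k-1)" using kn by simp
  have u: "[1..<n+1] = [1..<k+2] @ [k+2..<n+1]" unfolding nn by (rule upt_add_eq_append) simp
  have "map (\<sigma> \<circ> \<tau>) [k+2..<n+1] = map \<sigma> [k+2..<n+1]"
    by (rule map_cong) (auto simp: permutes_not_in[OF p])
  then show ?thesis unfolding word_def u by simp
qed

lemma T_sum_word:
  assumes k: "1 \<le> k" and kn: "k + 1 \<le> n"
  shows "(\<Sum>\<tau>\<in>T k 1. lnb (word n (\<sigma> \<circ> \<tau>))) = 0"
proof -
  have "(\<Sum>\<tau>\<in>T k 1. lnb (word n (\<sigma> \<circ> \<tau>))) = (\<Sum>\<tau>\<in>T k 1. Rs (map \<sigma> [k+2..<n+1]) (lnb (map (\<sigma> \<circ> \<tau>) [1..<k+2])))"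
    by (rule sum.cong) (simp_all add: word_comp[OF k kn] lnb_append)
  also have "\<dots> = Rs (map \<sigma> [k+2..<n+1]) (\<Sum>\<tau>\<in>T k 1. lnb (map (\<sigma> \<circ> \<tau>) [1..<k+2]))"
    by (simp add: Rs_sum)
  also have "\<dots> = 0" by (simp only: T_sum_zero[OF k] Rs_zero)
  finally show ?thesis .
qed

lemma Sum_apply: "finite M \<Longrightarrow> Sum M \<rho> = (if \<rho> \<in> M then 1 else 0)"
  by (simp add: Sum_def sum_fun_apply mono_def)

lemma beta_Sum:
  assumes fM: "finite M" and M: "M \<subseteq> {p. p permutes {1..n}}"
  shows "beta n (Sum M) \<tau>0 = (if \<tau>0 permutes {1..n} then (\<Sum>\<rho>\<in>M. lnb (word n \<rho>) (word n \<tau>0)) else 0)"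
proof -
  have fP: "finite {p. p permutes {1..n}}" by (rule finite_permutations) simp
  have "(\<Sum>\<sigma> | \<sigma> permutes {1..n}. Sum M \<sigma> * lnb (word n \<sigma>) (word n \<tau>0))
      = (\<Sum>\<sigma> \<in> {p. p permutes {1..n}}. if \<sigma> \<in> M then lnb (word n \<sigma>) (word n \<tau>0) else 0)"
    by (rule sum.cong) (simp_all add: Sum_apply[OF fM])
  also have "\<dots> = (\<Sum>\<rho>\<in>{p. p permutes {1..n}} \<inter> M. lnb (word n \<rho>) (word n \<tau>0))"
    by (rule sum.inter_restrict[OF fP, symmetric])
  also have "{p. p permutes {1..n}} \<inter> M = M" using M by blast
  finally show ?thesis by (simp add: beta_def)
qed

lemma perm_image_T:
  assumes s: "\<sigma> permutes {1..n}" and k: "1 \<le> k" and kn: "k + 1 \<le> n"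
  shows "(\<lambda>\<tau>. \<sigma> \<circ> \<tau>) ` T k 1 \<subseteq> {p. p permutes {1..n}}"
proof
  fix \<rho> assume "\<rho> \<in> (\<lambda>\<tau>. \<sigma> \<circ> \<tau>) ` T k 1"
  then obtain \<tau> where t: "\<tau> \<in> T k 1" and r: "\<rho> = \<sigma> \<circ> \<tau>" by blast
  have "\<tau> permutes {1..n}" by (rule permutes_subset[OF T_perm[OF k t]]) (use kn in auto)
  then show "\<rho> \<in> {p. p permutes {1..n}}" using s r by (simp add: permutes_compose)
qed

lemma B_ker:
  assumes s: "\<sigma> permutes {1..n}" and k: "1 \<le> k" and kn: "k + 1 \<le> n"
  shows "Sum ((\<lambda>\<tau>. \<sigma> \<circ> \<tau>) ` T k 1) \<in> ker_beta n"
proof -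
  define M where "M = (\<lambda>\<tau>. \<sigma> \<circ> \<tau>) ` T k 1"
  have fM: "finite M" using T_fin[OF k] by (simp add: M_def)
  have MP: "M \<subseteq> {p. p permutes {1..n}}" using perm_image_T[OF s k kn] by (simp add: M_def)
  have inj: "inj_on (\<lambda>\<tau>. \<sigma> \<circ> \<tau>) (T k 1)"
    using permutes_inj[OF s] by (auto simp: inj_on_def fun_eq_iff inj_def)
  have g: "Sum M \<in> gamma n" unfolding gamma_def using MP by (auto simp: Sum_apply[OF fM] split: if_splits)
  have "beta n (Sum M) = 0"
  proof
    fix \<tau>0
    have "(\<Sum>\<rho>\<in>M. lnb (word n \<rho>) (word n \<tau>0)) = (\<Sum>\<tau>\<in>T k 1. lnb (word n (\<sigma> \<circ> \<tau>)) (word n \<tau>0))"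
      using sum.reindex[OF inj, of "\<lambda>\<rho>. lnb (word n \<rho>) (word n \<tau>0)"] unfolding M_def by (simp add: o_def)
    also have "\<dots> = (\<Sum>\<tau>\<in>T k 1. lnb (word n (\<sigma> \<circ> \<tau>))) (word n \<tau>0)" by (simp add: sum_fun_apply)
    also have "\<dots> = 0" by (simp add: T_sum_word[OF k kn])
    finally show "beta n (Sum M) \<tau>0 = 0 \<tau>0" by (simp add: beta_Sum[OF fM MP])
  qed
  then show ?thesis using g by (simp add: ker_beta_def M_def)
qed


interpretation Z: module "zscale :: int \<Rightarrow> ('a \<Rightarrow> int) \<Rightarrow> ('a \<Rightarrow> int)"
  by unfold_locales (simp_all add: zscale_def fun_eq_iff algebra_simps)

lemma beta_add: "beta n (f + g) = beta n f + beta n g"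
  by (auto simp: beta_def fun_eq_iff sum.distrib algebra_simps)

lemma beta_zscale: "beta n (zscale c f) = zscale c (beta n f)"
  by (auto simp: beta_def fun_eq_iff zscale_def sum_distrib_left algebra_simps)

lemma beta_zero: "beta n 0 = 0"
  by (auto simp: beta_def fun_eq_iff)

lemma subspace_ker: "Z.subspace (ker_beta n)"
proof (rule Z.subspaceI)
  show "0 \<in> ker_beta n" by (simp add: ker_beta_def gamma_def beta_zero)
  show "x + y \<in> ker_beta n" if "x \<in> ker_beta n" "y \<in> ker_beta n" for x y
    using that by (auto simp: ker_beta_def gamma_def beta_add) (metis add.right_neutral)
  show "zscale c x \<in> ker_beta n" if "x \<in> ker_beta n" for c x
  proof -
    have "beta n (zscale c x) = 0" using that by (simp add: ker_beta_def beta_zscale Z.scale_zero_right)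
    then show ?thesis using that by (auto simp: ker_beta_def gamma_def zscale_def)
  qed
qed

lemma lnb_first:
  assumes "a \<notin> set xs"
  shows "lnb (a # xs) (a # ys) = (if xs = ys then 1 else 0)"
  using assms
proof (induction xs arbitrary: ys rule: rev_induct)
  case Nil
  then show ?case by (simp add: lnb_Cons X_def)
next
  case (snoc z xs)
  have az: "a \<noteq> z" using snoc.prems by auto
  have IH: "Rs xs (X a) (a # zs) = (if xs = zs then 1 else 0)" for zs
    using snoc.IH[of zs] snoc.prems by (simp add: lnb_Cons)
  show ?case
  proof (cases ys rule: rev_cases)
    case Nil
    then show ?thesis using az by (simp add: lnb_Cons Rs_append R_def)
  next
    case (snoc ws w)
    have "Rs (xs @ [z]) (X a) (a # ys) = (if w = z then (if xs = ws then 1 else 0) else 0)"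
      using az IH unfolding snoc by (simp add: Rs_append R_def butlast_append)
    then show ?thesis unfolding snoc by (auto simp: lnb_Cons)
  qed
qed


definition phi :: "(nat \<Rightarrow> nat) \<Rightarrow> ((nat \<Rightarrow> nat) \<Rightarrow> int)" where
  "phi \<sigma> = Sum ((\<lambda>\<tau>. \<sigma> \<circ> \<tau>) ` T (inv \<sigma> 1 - 1) 1)"

lemma inv_facts:
  assumes p: "\<sigma> permutes {1..n}" and n: "1 \<le> (n::nat)"
  shows "\<sigma> (inv \<sigma> 1) = 1" "inv \<sigma> 1 \<in> {1..n}"
proof -
  show "\<sigma> (inv \<sigma> 1) = 1" by (rule permutes_inverses(1)[OF p])
  have "inv \<sigma> permutes {1..n}" by (rule permutes_inv[OF p])
  from permutes_in_image[OF this, of 1] show "inv \<sigma> 1 \<in> {1..n}" using n by simp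
qed

lemma inv_eq: "\<sigma> permutes S \<Longrightarrow> \<sigma> j = 1 \<Longrightarrow> inv \<sigma> 1 = j"
  by (metis permutes_inverses(2))

lemma Q0_k:
  assumes p: "\<sigma> permutes {1..n}" and n: "1 \<le> (n::nat)" and s1: "\<sigma> 1 \<noteq> 1"
  shows "1 \<le> inv \<sigma> 1 - 1" "inv \<sigma> 1 - 1 + 1 \<le> n" "\<sigma> (inv \<sigma> 1 - 1 + 1) = 1"
    "inv \<sigma> 1 = inv \<sigma> 1 - 1 + 1"
proof -
  note f = inv_facts[OF p n]
  have "inv \<sigma> 1 \<noteq> 1" using f(1) s1 by auto
  then show "1 \<le> inv \<sigma> 1 - 1" "inv \<sigma> 1 - 1 + 1 \<le> n" "inv \<sigma> 1 = inv \<sigma> 1 - 1 + 1" using f(2) by auto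
  then show "\<sigma> (inv \<sigma> 1 - 1 + 1) = 1" using f(1) by simp
qed

lemma B_eq:
  assumes n: "1 \<le> (n::nat)"
  shows "{Sum ((\<lambda>\<tau>. \<sigma> \<circ> \<tau>) ` T k 1) | \<sigma> k.
                  \<sigma> permutes {1..n} \<and> \<sigma> (k + 1) = 1 \<and> 1 \<le> k \<and> k \<le> n - 1}
       = phi ` {\<sigma>. \<sigma> permutes {1..n} \<and> \<sigma> 1 \<noteq> 1}"
proof
  show "{Sum ((\<lambda>\<tau>. \<sigma> \<circ> \<tau>) ` T k 1) | \<sigma> k.
                  \<sigma> permutes {1..n} \<and> \<sigma> (k + 1) = 1 \<and> 1 \<le> k \<and> k \<le> n - 1}
       \<subseteq> phi ` {\<sigma>. \<sigma> permutes {1..n} \<and> \<sigma> 1 \<noteq> 1}"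
  proof
    fix b assume "b \<in> {Sum ((\<lambda>\<tau>. \<sigma> \<circ> \<tau>) ` T k 1) | \<sigma> k.
                  \<sigma> permutes {1..n} \<and> \<sigma> (k + 1) = 1 \<and> 1 \<le> k \<and> k \<le> n - 1}"
    then obtain \<sigma> k where b: "b = Sum ((\<lambda>\<tau>. \<sigma> \<circ> \<tau>) ` T k 1)" and p: "\<sigma> permutes {1..n}"
      and sk: "\<sigma> (k + 1) = 1" and k: "1 \<le> k" by blast
    have iv: "inv \<sigma> 1 = k + 1" by (rule inv_eq[OF p sk])
    have "\<sigma> 1 \<noteq> 1"
    proof
      assume "\<sigma> 1 = 1"
      then have "inv \<sigma> 1 = 1" by (rule inv_eq[OF p])
      then show False using iv k by simp
    qed
    moreover have "b = phi \<sigma>" unfolding b phi_def iv by simp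
    ultimately show "b \<in> phi ` {\<sigma>. \<sigma> permutes {1..n} \<and> \<sigma> 1 \<noteq> 1}" using p by blast
  qed
  show "phi ` {\<sigma>. \<sigma> permutes {1..n} \<and> \<sigma> 1 \<noteq> 1} \<subseteq> {Sum ((\<lambda>\<tau>. \<sigma> \<circ> \<tau>) ` T k 1) | \<sigma> k.
                  \<sigma> permutes {1..n} \<and> \<sigma> (k + 1) = 1 \<and> 1 \<le> k \<and> k \<le> n - 1}"
  proof
    fix b assume "b \<in> phi ` {\<sigma>. \<sigma> permutes {1..n} \<and> \<sigma> 1 \<noteq> 1}"
    then obtain \<sigma> where b: "b = phi \<sigma>" and p: "\<sigma> permutes {1..n}" and s1: "\<sigma> 1 \<noteq> 1" by blast
    note q = Q0_k[OF p n s1]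
    show "b \<in> {Sum ((\<lambda>\<tau>. \<sigma> \<circ> \<tau>) ` T k 1) | \<sigma> k.
                  \<sigma> permutes {1..n} \<and> \<sigma> (k + 1) = 1 \<and> 1 \<le> k \<and> k \<le> n - 1}"
      unfolding b phi_def using p q by fastforce
  qed
qed

lemma K:
  assumes p: "\<sigma> permutes {1..n}" and n: "1 \<le> (n::nat)" and s1: "\<sigma> 1 \<noteq> 1"
    and r: "\<rho> \<in> (\<lambda>\<tau>. \<sigma> \<circ> \<tau>) ` T (inv \<sigma> 1 - 1) 1"
  shows "\<rho> = \<sigma> \<or> (\<rho> permutes {1..n} \<and> inv \<rho> 1 < inv \<sigma> 1)"
proof -
  define k where "k = inv \<sigma> 1 - 1"
  note q = Q0_k[OF p n s1, folded k_def]
  from r obtain \<tau> where t: "\<tau> \<in> T k 1" and rt: "\<rho> = \<sigma> \<circ> \<tau>" unfolding k_def by blast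
  show ?thesis
  proof (cases "\<tau> = id")
    case True then show ?thesis using rt by simp
  next
    case False
    from T_pos[OF q(1) t False] obtain j where j: "1 \<le> j" "j < k + 1" "\<tau> j = k + 1" by blast
    have rp: "\<rho> permutes {1..n}" using perm_image_T[OF p q(1) q(2)] r unfolding k_def by blast
    have "\<rho> j = 1" using rt j q(3) by simp
    then have "inv \<rho> 1 = j" by (rule inv_eq[OF rp])
    then show ?thesis using rp j q(4) by simp
  qed
qed

lemma phi_apply:
  assumes p: "\<sigma> permutes {1..n}" and n: "1 \<le> (n::nat)" and s1: "\<sigma> 1 \<noteq> 1"
  shows "phi \<sigma> \<rho> = (if \<rho> \<in> (\<lambda>\<tau>. \<sigma> \<circ> \<tau>) ` T (inv \<sigma> 1 - 1) 1 then 1 else 0)"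
proof -
  note q = Q0_k[OF p n s1]
  have "finite ((\<lambda>\<tau>. \<sigma> \<circ> \<tau>) ` T (inv \<sigma> 1 - 1) 1)" using T_fin[OF q(1)] by simp
  then show ?thesis unfolding phi_def by (rule Sum_apply)
qed

lemma phi_self:
  assumes p: "\<sigma> permutes {1..n}" and n: "1 \<le> (n::nat)" and s1: "\<sigma> 1 \<noteq> 1"
  shows "phi \<sigma> \<sigma> = 1"
proof -
  have "\<sigma> \<in> (\<lambda>\<tau>. \<sigma> \<circ> \<tau>) ` T (inv \<sigma> 1 - 1) 1"
    by (rule image_eqI[of _ _ id]) (simp_all add: T_eq)
  then show ?thesis by (simp add: phi_apply[OF p n s1])
qed

lemma phi_inj:
  assumes n: "1 \<le> (n::nat)"
  shows "inj_on phi {\<sigma>. \<sigma> permutes {1..n} \<and> \<sigma> 1 \<noteq> 1}"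
proof (rule inj_onI)
  fix \<sigma> \<sigma>' assume s: "\<sigma> \<in> {\<sigma>. \<sigma> permutes {1..n} \<and> \<sigma> 1 \<noteq> 1}"
    and s': "\<sigma>' \<in> {\<sigma>. \<sigma> permutes {1..n} \<and> \<sigma> 1 \<noteq> 1}" and e: "phi \<sigma> = phi \<sigma>'"
  have "phi \<sigma>' \<sigma> = 1" using e phi_self[of \<sigma> n] s n by simp
  then have a: "\<sigma> \<in> (\<lambda>\<tau>. \<sigma>' \<circ> \<tau>) ` T (inv \<sigma>' 1 - 1) 1"
    using phi_apply[of \<sigma>' n \<sigma>] s' n by (auto split: if_splits)
  have "phi \<sigma> \<sigma>' = 1" using e phi_self[of \<sigma>' n] s' n by simp
  then have b: "\<sigma>' \<in> (\<lambda>\<tau>. \<sigma> \<circ> \<tau>) ` T (inv \<sigma> 1 - 1) 1"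
    using phi_apply[of \<sigma> n \<sigma>'] s n by (auto split: if_splits)
  show "\<sigma> = \<sigma>'" using K[of \<sigma>' n \<sigma>, OF _ n _ a] K[of \<sigma> n \<sigma>', OF _ n _ b] s s' by auto
qed


lemma P1_eq: "{\<sigma>. \<sigma> permutes {1..(n::nat)} \<and> \<sigma> 1 = 1} = {\<sigma>. \<sigma> permutes {2..n}}"
proof (cases "1 \<le> n")
  case n: True
  have e: "{1..n} = insert 1 {2..n}" using n by auto
  show ?thesis
  proof (rule set_eqI, rule iffI)
    fix \<sigma> assume "\<sigma> \<in> {\<sigma>. \<sigma> permutes {1..n} \<and> \<sigma> 1 = 1}"
    then have p: "\<sigma> permutes insert 1 {2..n}" and s1: "\<sigma> 1 = 1" using e by auto
    from permutes_insert_lemma[OF p] show "\<sigma> \<in> {\<sigma>. \<sigma> permutes {2..n}}" using s1 by simp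
  next
    fix \<sigma> assume "\<sigma> \<in> {\<sigma>. \<sigma> permutes {2..n}}"
    then have p: "\<sigma> permutes {2..n}" by simp
    have "\<sigma> permutes {1..n}" by (rule permutes_subset[OF p]) auto
    moreover have "\<sigma> 1 = 1" by (rule permutes_not_in[OF p]) simp
    ultimately show "\<sigma> \<in> {\<sigma>. \<sigma> permutes {1..n} \<and> \<sigma> 1 = 1}" by simp
  qed
next
  case False
  then have "n = 0" by simp
  then show ?thesis by (auto simp: permutes_empty)
qed

lemma card_Q0:
  assumes n: "1 \<le> (n::nat)"
  shows "card {\<sigma>. \<sigma> permutes {1..n} \<and> \<sigma> 1 \<noteq> 1} = fact (n - 1) * (n - 1)"
proof -
  define P where "P = {\<sigma>. \<sigma> permutes {1..n}}"
  define P1 where "P1 = {\<sigma>. \<sigma> permutes {1..n} \<and> \<sigma> 1 = 1}"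
  have fP: "finite P" unfolding P_def by (rule finite_permutations) simp
  have cP: "card P = fact n" unfolding P_def by (rule card_permutations) simp_all
  have cP1: "card P1 = fact (n - 1)" unfolding P1_def P1_eq by (rule card_permutations) simp_all
  have "{\<sigma>. \<sigma> permutes {1..n} \<and> \<sigma> 1 \<noteq> 1} = P - P1" by (auto simp: P_def P1_def)
  then have "card {\<sigma>. \<sigma> permutes {1..n} \<and> \<sigma> 1 \<noteq> 1} = fact n - fact (n - 1)"
  proof -
    have "P1 \<subseteq> P" by (auto simp: P_def P1_def)
    moreover have "finite P1" using calculation fP finite_subset by blast
    ultimately have "card (P - P1) = card P - card P1" by (rule card_Diff_subset[rotated])
    then show ?thesis using \<open>{\<sigma>. \<sigma> permutes {1..n} \<and> \<sigma> 1 \<noteq> 1} = P - P1\<close> cP cP1 by simp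
  qed
  also have "fact n = n * fact (n - 1)" using n by (simp add: fact_reduce)
  also have "n * fact (n - 1) - fact (n - 1) = fact (n - 1) * (n - (1::nat))"
    by (simp add: diff_mult_distrib algebra_simps)
  finally show ?thesis .
qed

lemma word_fix1:
  assumes p: "\<sigma> permutes {1..n}" and s1: "\<sigma> 1 = 1" and n: "1 \<le> n"
  shows "word n \<sigma> = 1 # map \<sigma> [2..<n+1]" "1 \<notin> set (map \<sigma> [2..<n+1])"
proof -
  have u: "[1..<n+1] = 1 # [2..<n+1]" using upt_conv_Cons[of 1 "n+1"] n by (simp add: numeral_2_eq_2 One_nat_def)
  show "word n \<sigma> = 1 # map \<sigma> [2..<n+1]" unfolding word_def u by (simp add: s1)
  show "1 \<notin> set (map \<sigma> [2..<n+1])"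
  proof
    assume "1 \<in> set (map \<sigma> [2..<n+1])"
    then obtain j where j: "2 \<le> j" "\<sigma> j = 1" by auto
    then have "j = 1" using permutes_inj[OF p] s1 by (metis injD)
    then show False using j by simp
  qed
qed

lemma map_fix1_eq:
  assumes p: "\<sigma> permutes {1..n}" and q: "\<tau> permutes {1..n}" and s1: "\<sigma> 1 = 1" and t1: "\<tau> 1 = 1"
    and e: "map \<sigma> [2..<n+1] = map \<tau> [2..<n+1]"
  shows "\<sigma> = \<tau>"
proof
  fix j show "\<sigma> j = \<tau> j"
  proof (cases "j \<in> {2..n}")
    case True
    then have "j \<in> set [2..<n+1]" by auto
    then show ?thesis using e by (simp add: map_eq_conv)
  next
    case False
    then have "j = 1 \<or> j \<notin> {1..n}" by auto
    then show ?thesis using s1 t1 permutes_not_in[OF p] permutes_not_in[OF q] by auto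
  qed
qed

lemma beta_fix1:
  assumes n: "1 \<le> n" and vg: "v \<in> gamma n"
    and V: "\<forall>\<tau>. v \<tau> \<noteq> 0 \<longrightarrow> \<tau> 1 = 1"
    and t: "\<tau> permutes {1..n}" and t1: "\<tau> 1 = 1"
  shows "beta n v \<tau> = v \<tau>"
proof -
  define P where "P = {\<sigma>. \<sigma> permutes {1..n}}"
  have fP: "finite P" unfolding P_def by (rule finite_permutations) simp
  have tP: "\<tau> \<in> P" using t by (simp add: P_def)
  have wt: "word n \<tau> = 1 # map \<tau> [2..<n+1]" "1 \<notin> set (map \<tau> [2..<n+1])"
    using word_fix1[OF t t1 n] by auto
  have "beta n v \<tau> = (\<Sum>\<sigma>\<in>P. v \<sigma> * lnb (word n \<sigma>) (word n \<tau>))"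
    using t by (simp add: beta_def P_def)
  also have "\<dots> = v \<tau> * lnb (word n \<tau>) (word n \<tau>) + (\<Sum>\<sigma>\<in>P - {\<tau>}. v \<sigma> * lnb (word n \<sigma>) (word n \<tau>))"
    by (rule sum.remove[OF fP tP])
  also have "(\<Sum>\<sigma>\<in>P - {\<tau>}. v \<sigma> * lnb (word n \<sigma>) (word n \<tau>)) = 0"
  proof (rule sum.neutral, rule ballI)
    fix \<sigma> assume s: "\<sigma> \<in> P - {\<tau>}"
    show "v \<sigma> * lnb (word n \<sigma>) (word n \<tau>) = 0"
    proof (cases "v \<sigma> = 0")
      case False
      then have s1: "\<sigma> 1 = 1" using V by blast
      have sp: "\<sigma> permutes {1..n}" using s by (simp add: P_def)
      note ws = word_fix1[OF sp s1 n]
      have neq: "map \<sigma> [2..<n+1] \<noteq> map \<tau> [2..<n+1]" using map_fix1_eq[OF sp t s1 t1] s by blast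
      have "lnb (word n \<sigma>) (word n \<tau>) = 0" unfolding ws(1) wt(1) lnb_first[OF ws(2)]
        by (simp only: if_not_P[OF neq])
      then show ?thesis by simp
    qed simp
  qed
  also have "lnb (word n \<tau>) (word n \<tau>) = 1" unfolding wt(1) by (simp add: lnb_first[OF wt(2)])
  finally show ?thesis by simp
qed


abbreviation Q0 :: "nat \<Rightarrow> (nat \<Rightarrow> nat) set" where
  "Q0 n \<equiv> {\<sigma>. \<sigma> permutes {1..n} \<and> \<sigma> 1 \<noteq> 1}"

lemma phi_ker:
  assumes n: "1 \<le> (n::nat)" and s: "\<sigma> \<in> Q0 n"
  shows "phi \<sigma> \<in> ker_beta n"
proof -
  have p: "\<sigma> permutes {1..n}" and s1: "\<sigma> 1 \<noteq> 1" using s by auto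
  note q = Q0_k[OF p n s1]
  show ?thesis unfolding phi_def by (rule B_ker[OF p q(1) q(2)])
qed

lemma indep:
  assumes n: "1 \<le> (n::nat)"
  shows "\<not> Z.dependent (phi ` Q0 n)"
proof
  assume "Z.dependent (phi ` Q0 n)"
  then obtain t u where ft: "finite t" and tsub: "t \<subseteq> phi ` Q0 n"
    and s0: "(\<Sum>v\<in>t. zscale (u v) v) = 0" and ex: "\<exists>v\<in>t. u v \<noteq> 0"
    unfolding Z.dependent_explicit by blast
  define A where "A = {\<sigma> \<in> Q0 n. phi \<sigma> \<in> t \<and> u (phi \<sigma>) \<noteq> 0}"
  have fQ: "finite (Q0 n)" by (rule finite_subset[OF _ finite_permutations[of "{1..n}"]]) auto
  have fA: "finite A" by (rule finite_subset[OF _ fQ]) (auto simp: A_def)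
  from ex obtain v0 where v0: "v0 \<in> t" "u v0 \<noteq> 0" by blast
  then obtain \<sigma>0 where "\<sigma>0 \<in> Q0 n" "v0 = phi \<sigma>0" using tsub by blast
  then have "\<sigma>0 \<in> A" using v0 by (simp add: A_def)
  then have Ane: "A \<noteq> {}" by blast
  define m where "m = Max ((\<lambda>\<sigma>. inv \<sigma> 1) ` A)"
  have "m \<in> (\<lambda>\<sigma>. inv \<sigma> 1) ` A" unfolding m_def using fA Ane by (intro Max_in) auto
  then obtain \<sigma>m where sm: "\<sigma>m \<in> A" and msm: "inv \<sigma>m 1 = m" by auto
  have mmax: "\<And>\<sigma>. \<sigma> \<in> A \<Longrightarrow> inv \<sigma> 1 \<le> m" unfolding m_def using fA by (intro Max_ge) auto
  have smQ: "\<sigma>m permutes {1..n}" "\<sigma>m 1 \<noteq> 1" using sm by (auto simp: A_def)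
  have smt: "phi \<sigma>m \<in> t" "u (phi \<sigma>m) \<noteq> 0" using sm by (auto simp: A_def)
  have "0 = (\<Sum>v\<in>t. zscale (u v) v) \<sigma>m" using s0 by simp
  also have "\<dots> = (\<Sum>v\<in>t. u v * v \<sigma>m)" by (simp add: sum_fun_apply zscale_def)
  also have "\<dots> = u (phi \<sigma>m) * phi \<sigma>m \<sigma>m + (\<Sum>v\<in>t - {phi \<sigma>m}. u v * v \<sigma>m)"
    by (rule sum.remove[OF ft smt(1)])
  also have "(\<Sum>v\<in>t - {phi \<sigma>m}. u v * v \<sigma>m) = 0"
  proof (rule sum.neutral, rule ballI)
    fix v assume v: "v \<in> t - {phi \<sigma>m}"
    show "u v * v \<sigma>m = 0"
    proof (cases "u v = 0")
      case False
      from v tsub obtain \<sigma>' where s': "\<sigma>' \<in> Q0 n" and vs: "v = phi \<sigma>'" by blast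
      have p': "\<sigma>' permutes {1..n}" "\<sigma>' 1 \<noteq> 1" using s' by auto
      have "\<sigma>' \<in> A" using s' v vs False by (simp add: A_def)
      then have le: "inv \<sigma>' 1 \<le> m" by (rule mmax)
      have "v \<sigma>m = 0"
      proof (rule ccontr)
        assume "v \<sigma>m \<noteq> 0"
        then have "\<sigma>m \<in> (\<lambda>\<tau>. \<sigma>' \<circ> \<tau>) ` T (inv \<sigma>' 1 - 1) 1"
          using phi_apply[OF p'(1) n p'(2)] vs by (auto split: if_splits)
        from K[OF p'(1) n p'(2) this] show False
        proof
          assume "\<sigma>m = \<sigma>'" then show False using v vs by simp
        next
          assume "\<sigma>m permutes {1..n} \<and> inv \<sigma>m 1 < inv \<sigma>' 1"
          then show False using le msm by simp
        qed
      qed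
      then show ?thesis by simp
    qed simp
  qed
  also have "phi \<sigma>m \<sigma>m = 1" by (rule phi_self[OF smQ(1) n smQ(2)])
  finally have "u (phi \<sigma>m) = 0" by simp
  then show False using smt(2) by simp
qed

lemma mono_span:
  assumes n: "1 \<le> (n::nat)" and p: "\<sigma> permutes {1..n}"
  shows "mono \<sigma> \<in> Z.span (phi ` Q0 n \<union> mono ` {\<sigma>. \<sigma> permutes {1..n} \<and> \<sigma> 1 = 1})"
proof -
  define S where "S = Z.span (phi ` Q0 n \<union> mono ` {\<sigma>. \<sigma> permutes {1..n} \<and> \<sigma> 1 = 1})"
  have "\<forall>\<sigma>. \<sigma> permutes {1..n} \<longrightarrow> inv \<sigma> 1 = j \<longrightarrow> mono \<sigma> \<in> S" for j
  proof (induction j rule: less_induct)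
    case (less j)
    show ?case
    proof (intro allI impI)
      fix \<sigma> assume p: "\<sigma> permutes {1..n}" and ij: "inv \<sigma> 1 = j"
      show "mono \<sigma> \<in> S"
      proof (cases "\<sigma> 1 = 1")
        case True
        then show ?thesis unfolding S_def using p by (intro Z.span_base) blast
      next
        case s1: False
        define M where "M = (\<lambda>\<tau>. \<sigma> \<circ> \<tau>) ` T (inv \<sigma> 1 - 1) 1"
        note q = Q0_k[OF p n s1]
        have fM: "finite M" using T_fin[OF q(1)] by (simp add: M_def)
        have sM: "\<sigma> \<in> M" unfolding M_def by (rule image_eqI[of _ _ id]) (simp_all add: T_eq)
        have "phi \<sigma> = Sum M" by (simp add: phi_def M_def)
        also have "\<dots> = mono \<sigma> + (\<Sum>\<rho>\<in>M - {\<sigma>}. mono \<rho>)" unfolding Sum_def by (rule sum.remove[OF fM sM])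
        finally have e: "mono \<sigma> = phi \<sigma> - (\<Sum>\<rho>\<in>M - {\<sigma>}. mono \<rho>)" by simp
        have "phi \<sigma> \<in> S" unfolding S_def using p s1 by (intro Z.span_base) blast
        moreover have "(\<Sum>\<rho>\<in>M - {\<sigma>}. mono \<rho>) \<in> S"
          unfolding S_def
        proof (rule Z.span_sum)
          fix \<rho> assume r: "\<rho> \<in> M - {\<sigma>}"
          then have "\<rho> permutes {1..n} \<and> inv \<rho> 1 < inv \<sigma> 1" using K[OF p n s1, of \<rho>] by (auto simp: M_def)
          then have "mono \<rho> \<in> S" using less.IH ij by blast
          then show "mono \<rho> \<in> Z.span (phi ` Q0 n \<union> mono ` {\<sigma>. \<sigma> permutes {1..n} \<and> \<sigma> 1 = 1})"
            unfolding S_def .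
        qed
        ultimately show ?thesis unfolding e S_def by (rule Z.span_diff)
      qed
    qed
  qed
  then show ?thesis using p unfolding S_def by blast
qed

lemma span_eq:
  assumes n: "1 \<le> (n::nat)"
  shows "Z.span (phi ` Q0 n) = ker_beta n"
proof
  show sub: "Z.span (phi ` Q0 n) \<subseteq> ker_beta n"
    by (rule Z.span_minimal[OF _ subspace_ker]) (use phi_ker[OF n] in blast)
  show "ker_beta n \<subseteq> Z.span (phi ` Q0 n)"
  proof
    fix f assume f: "f \<in> ker_beta n"
    define P where "P = {\<sigma>. \<sigma> permutes {1..n}}"
    define M1 where "M1 = mono ` {\<sigma>. \<sigma> permutes {1..n} \<and> \<sigma> 1 = 1}"
    have fP: "finite P" unfolding P_def by (rule finite_permutations) simp
    have fg: "f \<in> gamma n" using f by (simp add: ker_beta_def)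
    have fe: "f = (\<Sum>\<sigma>\<in>P. zscale (f \<sigma>) (mono \<sigma>))"
    proof
      fix \<tau>
      have "(\<Sum>\<sigma>\<in>P. zscale (f \<sigma>) (mono \<sigma>)) \<tau> = (\<Sum>\<sigma>\<in>P. f \<sigma> * (if \<tau> = \<sigma> then 1 else 0))"
        by (simp add: sum_fun_apply zscale_def mono_def)
      also have "\<dots> = (\<Sum>\<sigma>\<in>P. if \<tau> = \<sigma> then f \<sigma> else 0)" by (rule sum.cong) auto
      also have "\<dots> = (if \<tau> \<in> P then f \<tau> else 0)" using fP by simp
      also have "\<dots> = f \<tau>" using fg by (auto simp: gamma_def P_def)
      finally show "f \<tau> = (\<Sum>\<sigma>\<in>P. zscale (f \<sigma>) (mono \<sigma>)) \<tau>" by simp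
    qed
    have "f \<in> Z.span (phi ` Q0 n \<union> M1)"
      unfolding M1_def by (subst fe, rule Z.span_sum, rule Z.span_scale, rule mono_span[OF n]) (simp add: P_def)
    then obtain b v where fbv: "f = b + v" and b: "b \<in> Z.span (phi ` Q0 n)" and v: "v \<in> Z.span M1"
      unfolding Z.span_Un by blast
    define V1 where "V1 = {v. \<forall>\<tau>. v \<tau> \<noteq> (0::int) \<longrightarrow> \<tau> permutes {1..n} \<and> \<tau> 1 = 1}"
    have "Z.subspace V1"
    proof (rule Z.subspaceI)
      show "0 \<in> V1" by (simp add: V1_def)
      show "x + y \<in> V1" if "x \<in> V1" "y \<in> V1" for x y
        using that by (auto simp: V1_def) (metis add.right_neutral)+
      show "zscale c x \<in> V1" if "x \<in> V1" for c x using that by (auto simp: V1_def zscale_def)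
    qed
    moreover have "M1 \<subseteq> V1" by (auto simp: M1_def V1_def mono_def split: if_splits)
    ultimately have vV: "v \<in> V1" using Z.span_minimal v by blast
    have bk: "b \<in> ker_beta n" using sub b by blast
    have "v = f - b" using fbv by simp
    then have vk: "v \<in> ker_beta n" using Z.subspace_diff[OF subspace_ker f bk] by simp
    have "v = 0"
    proof
      fix \<tau> show "v \<tau> = 0 \<tau>"
      proof (rule ccontr)
        assume nz: "v \<tau> \<noteq> 0 \<tau>"
        then have t: "\<tau> permutes {1..n}" "\<tau> 1 = 1" using vV by (auto simp: V1_def)
        have "beta n v \<tau> = v \<tau>"
          by (rule beta_fix1[OF n _ _ t]) (use vk vV in \<open>auto simp: ker_beta_def V1_def\<close>)
        moreover have "beta n v = 0" using vk by (simp add: ker_beta_def)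
        ultimately show False using nz by simp
      qed
    qed
    then show "f \<in> Z.span (phi ` Q0 n)" using fbv b by simp
  qed
qed

theorem theorem2:
  fixes n :: nat
  assumes "n \<ge> 2"
  defines "B \<equiv> {Sum ((\<lambda>\<tau>. \<sigma> \<circ> \<tau>) ` T k 1) | \<sigma> k.
                  \<sigma> permutes {1..n} \<and> \<sigma> (k + 1) = 1 \<and> 1 \<le> k \<and> k \<le> n - 1}"
  shows "\<not> module.dependent zscale B \<and> module.span zscale B = ker_beta n
         \<and> card B = fact (n - 1) * (n - 1)"
proof -
  have n: "1 \<le> n" using assms(1) by simp
  have Be: "B = phi ` Q0 n" unfolding B_def by (rule B_eq[OF n])
  have "card B = card (Q0 n)" unfolding Be by (rule card_image[OF phi_inj[OF n]])
  then show ?thesis using indep[OF n] span_eq[OF n] card_Q0[OF n] Be by simp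
qed


end
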